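(* The conditional logics $\mathsf{CKCEM}$ and $\mathsf{CKCEMID}$ do not have the uniform Lyndon interpolation property.
   Context: Formulas of $\mathcal{L}_\triangleright$: atoms, $\bot$, $\wedge,\vee,\to$, binary $\triangleright$; $\top:=\bot\to\bot$, $\neg A:=A\to\bot$. $\mathsf{CE}$ is the smallest set containing all instances of classical tautologies and closed under modus ponens and the rule: from $\phi_0\leftrightarrow\phi_1$ and $\psi_0\leftrightarrow\psi_1$ infer $(\phi_0\triangleright\psi_0)\to(\phi_1\triangleright\psi_1)$. $\mathsf{CKCEM}$ is $\mathsf{CE}$ plus all instances of (CM) $(\phi\triangleright\psi\wedge\theta)\to(\phi\triangleright\psi)\wedge(\phi\triangleright\theta)$, (CC) $(\phi\triangleright\psi)\wedge(\phi\triangleright\theta)\to(\phi\triangleright\psi\wedge\theta)$, (CN) $\phi\triangleright\top$, (CEM) $(\phi\triangleright\psi)\vee(\phi\triangleright\neg\psi)$; $\mathsf{CKCEMID}=\mathsf{CKCEM}+$(ID) $\phi\triangleright\phi$. Positive/negative variables: $V^+(p)=\{p\}$, $V^-(p)=\varnothing$; $V^\pm(\bot)=V^\pm(\top)=\varnothing$; $V^\pm(\phi\odot\psi)=V^\pm(\phi)\cup V^\pm(\psi)$ for $\odot\in\{\wedge,\vee\}$; $V^+(\phi\to\psi)=V^-(\phi)\cup V^+(\psi)$, $V^-(\phi\to\psi)=V^+(\phi)\cup V^-(\psi)$; $V^+(\phi\triangleright\psi)=V^-(\phi)\cup V^+(\psi)$, $V^-(\phi\triangleright\psi)=V^+(\phi)\cup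 V^-(\psi)$. $p^\circ$-free: $p\notin V^\circ(\cdot)$. ULIP for a logic $L$: for every formula $\phi$, atom $p$, $\circ\in\{+,-\}$ there are $p^\circ$-free formulas $\forall^\circ p\,\phi$, $\exists^\circ p\,\phi$ with $V^\dagger(\cdot)\subseteq V^\dagger(\phi)$ for both $\dagger\in\{+,-\}$, such that $L\vdash\forall^\circ p\,\phi\to\phi$; for every $p^\circ$-free $\psi$, $L\vdash\psi\to\phi$ implies $L\vdash\psi\to\forall^\circ p\,\phi$; $L\vdash\phi\to\exists^\circ p\,\phi$; for every $p^\circ$-free $\psi$, $L\vdash\phi\to\psi$ implies $L\vdash\exists^\circ p\,\phi\to\psi$. *)

theory Defs
  imports Main
begin

datatype fm = Atom nat | Bot | And fm fm | Or fm fm | Imp fm fm | Cond fm fm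

definition Top :: fm where "Top = Imp Bot Bot"
definition Neg :: "fm \<Rightarrow> fm" where "Neg A = Imp A Bot"
definition Iff :: "fm \<Rightarrow> fm \<Rightarrow> fm" where "Iff A B = And (Imp A B) (Imp B A)"

fun ceval :: "(fm \<Rightarrow> bool) \<Rightarrow> fm \<Rightarrow> bool" where
  "ceval I (Atom p) = I (Atom p)"
| "ceval I Bot = False"
| "ceval I (And a b) = (ceval I a \<and> ceval I b)"
| "ceval I (Or a b) = (ceval I a \<or> ceval I b)"
| "ceval I (Imp a b) = (ceval I a \<longrightarrow> ceval I b)"
| "ceval I (Cond a b) = I (Cond a b)"

definition taut_inst :: "fm \<Rightarrow> bool" where
  "taut_inst A = (\<forall>I. ceval I A)"

text \<open>Smallest set containing the tautology instances and the extra axioms Ax,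
  closed under modus ponens and RCEA/RCEC rule of CE.\<close>
inductive derivable :: "fm set \<Rightarrow> fm \<Rightarrow> bool" for Ax :: "fm set" where
  taut: "taut_inst A \<Longrightarrow> derivable Ax A"
| ax: "A \<in> Ax \<Longrightarrow> derivable Ax A"
| mp: "derivable Ax (Imp A B) \<Longrightarrow> derivable Ax A \<Longrightarrow> derivable Ax B"
| ce: "derivable Ax (Iff a0 a1) \<Longrightarrow> derivable Ax (Iff b0 b1) \<Longrightarrow>
       derivable Ax (Imp (Cond a0 b0) (Cond a1 b1))"

definition CKCEM_ax :: "fm set" where
  "CKCEM_ax =
     {Imp (Cond a (And b c)) (And (Cond a b) (Cond a c)) | a b c. True}
   \<union> {Imp (And (Cond a b) (Cond a c)) (Cond a (And b c)) | a b c. True}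
   \<union> {Cond a Top | a. True}
   \<union> {Or (Cond a b) (Cond a (Neg b)) | a b. True}"

definition CKCEMID_ax :: "fm set" where
  "CKCEMID_ax = CKCEM_ax \<union> {Cond a a | a. True}"

definition CKCEM :: "fm \<Rightarrow> bool" where "CKCEM = derivable CKCEM_ax"
definition CKCEMID :: "fm \<Rightarrow> bool" where "CKCEMID = derivable CKCEMID_ax"

text \<open>Positive (True) and negative (False) variables.\<close>
fun V :: "bool \<Rightarrow> fm \<Rightarrow> nat set" where
  "V pos (Atom p) = (if pos then {p} else {})"
| "V pos Bot = {}"
| "V pos (And a b) = V pos a \<union> V pos b"
| "V pos (Or a b) = V pos a \<union> V pos b"
| "V pos (Imp a b) = V (\<not> pos) a \<union> V pos b"
| "V pos (Cond a b) = V (\<not> pos) a \<union> V pos b"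

text \<open>Uniform Lyndon interpolation property; the polarity o ranges over {+,-} = {True, False}.\<close>
definition ULIP :: "(fm \<Rightarrow> bool) \<Rightarrow> bool" where
  "ULIP L = (\<forall>\<phi> p (pol::bool). \<exists>A E.
      p \<notin> V pol A \<and> V True A \<subseteq> V True \<phi> \<and> V False A \<subseteq> V False \<phi> \<and>
      p \<notin> V pol E \<and> V True E \<subseteq> V True \<phi> \<and> V False E \<subseteq> V False \<phi> \<and>
      L (Imp A \<phi>) \<and>
      (\<forall>\<psi>. p \<notin> V pol \<psi> \<longrightarrow> L (Imp \<psi> \<phi>) \<longrightarrow> L (Imp \<psi> A)) \<and>
      L (Imp \<phi> E) \<and>
      (\<forall>\<psi>. p \<notin> V pol \<psi> \<longrightarrow> L (Imp \<phi> \<psi>) \<longrightarrow> L (Imp E \<psi>)))"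

end

theory Submission
  imports Defs
begin

fun sem :: "(nat \<Rightarrow> bool set) \<Rightarrow> (bool \<Rightarrow> bool set \<Rightarrow> bool set) \<Rightarrow> fm \<Rightarrow> bool \<Rightarrow> bool" where
  "sem Va f (Atom p) w = (w \<in> Va p)"
| "sem Va f Bot w = False"
| "sem Va f (And a b) w = (sem Va f a w \<and> sem Va f b w)"
| "sem Va f (Or a b) w = (sem Va f a w \<or> sem Va f b w)"
| "sem Va f (Imp a b) w = (sem Va f a w \<longrightarrow> sem Va f b w)"
| "sem Va f (Cond a b) w = (f w {u. sem Va f a u} \<subseteq> {u. sem Va f b u})"

definition fsel :: "bool \<Rightarrow> bool set \<Rightarrow> bool set" where
  "fsel w X = (if X = {True} then {True} else if X = {False} then {False} else {})"

lemma fsel_sub: "fsel w X \<subseteq> X" by (simp add: fsel_def)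
lemma fsel_single: "fsel w X = {} \<or> (\<exists>x. fsel w X = {x})" by (auto simp: fsel_def)

lemma ceval_sem: "ceval (\<lambda>x. sem Va f x w) A = sem Va f A w"
  by (induction A) auto

lemma ax_sound: "A \<in> CKCEMID_ax \<Longrightarrow> sem Va fsel A w"
proof -
  assume "A \<in> CKCEMID_ax"
  then consider (cm) a b c where "A = Imp (Cond a (And b c)) (And (Cond a b) (Cond a c))"
    | (cc) a b c where "A = Imp (And (Cond a b) (Cond a c)) (Cond a (And b c))"
    | (cn) a where "A = Cond a Top"
    | (cem) a b where "A = Or (Cond a b) (Cond a (Neg b))"
    | (id) a where "A = Cond a a"
    unfolding CKCEMID_ax_def CKCEM_ax_def by blast
  then show ?thesis
  proof cases
    case (cm a b c) then show ?thesis by auto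
  next
    case (cc a b c) then show ?thesis by auto
  next
    case (cn a)
    have "Collect (sem Va fsel (Imp Bot Bot)) = UNIV" by auto
    then show ?thesis using cn by (simp add: Top_def)
  next
    case (cem a b)
    from fsel_single[of w "{u. sem Va fsel a u}"] show ?thesis
    proof
      assume "fsel w {u. sem Va fsel a u} = {}" then show ?thesis using cem by simp
    next
      assume "\<exists>x. fsel w {u. sem Va fsel a u} = {x}"
      then obtain x where "fsel w {u. sem Va fsel a u} = {x}" by blast
      then show ?thesis using cem by (cases "sem Va fsel b x") (simp_all add: Neg_def)
    qed
  next
    case (id a) then show ?thesis using fsel_sub by simp
  qed
qed

lemma sound: "derivable CKCEMID_ax A \<Longrightarrow> \<forall>w. sem Va fsel A w"
proof (induction rule: derivable.induct)
  case (taut A)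
  then show ?case using ceval_sem unfolding taut_inst_def by metis
next
  case (ax A)
  then show ?case using ax_sound by blast
next
  case (mp A B)
  then show ?case by simp
next
  case (ce a0 a1 b0 b1)
  have "{u. sem Va fsel a0 u} = {u. sem Va fsel a1 u}"
       "{u. sem Va fsel b0 u} = {u. sem Va fsel b1 u}"
    using ce.IH by (auto simp: Iff_def)
  then show ?case by simp
qed

lemma mono_der: "derivable CKCEM_ax A \<Longrightarrow> derivable CKCEMID_ax A"
proof (induction rule: derivable.induct)
  case (ax A) then show ?case by (auto simp: CKCEMID_ax_def intro: derivable.ax)
next
  case (taut A) then show ?case by (rule derivable.taut)
next
  case (mp A B) then show ?case using derivable.mp by blast
next
  case (ce a0 a1 b0 b1) then show ?case using derivable.ce by blast
qed

lemma free_agree: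
  "p \<notin> V True A \<and> p \<notin> V False A \<Longrightarrow> (\<forall>q. q \<noteq> p \<longrightarrow> V1 q = V2 q) \<Longrightarrow>
   sem V1 f A w = sem V2 f A w"
proof (induction A arbitrary: w)
  case (Cond a b)
  then have "{u. sem V1 f a u} = {u. sem V2 f a u}" "{u. sem V1 f b u} = {u. sem V2 f b u}"
    by auto
  then show ?case by simp
qed auto

abbreviation phi where "phi \<equiv> Cond (Atom 0) (Atom 1)"
abbreviation psi where "psi \<equiv> Neg (Cond (Atom 0) (Neg (Atom 1)))"

lemma key_der: "derivable CKCEM_ax (Imp psi phi)"
proof -
  have 1: "derivable CKCEM_ax (Or phi (Cond (Atom 0) (Neg (Atom 1))))"
    by (rule derivable.ax) (auto simp: CKCEM_ax_def)
  have 2: "derivable CKCEM_ax (Imp (Or phi (Cond (Atom 0) (Neg (Atom 1)))) (Imp psi phi))"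
    by (rule derivable.taut) (auto simp: taut_inst_def Neg_def)
  show ?thesis using derivable.mp[OF 2 1] .
qed

definition V1 :: "nat \<Rightarrow> bool set" where "V1 = (\<lambda>q. {True})"
definition V2 :: "nat \<Rightarrow> bool set" where "V2 = (\<lambda>q. if q = 0 then {False} else {True})"

lemma noULIP:
  assumes der: "\<And>X. L X \<Longrightarrow> derivable CKCEMID_ax X"
    and k: "L (Imp psi phi)"
  shows "\<not> ULIP L"
proof
  assume "ULIP L"
  then obtain A where A: "0 \<notin> V False A" "V True A \<subseteq> V True phi"
     "L (Imp A phi)" "\<forall>\<psi>. 0 \<notin> V False \<psi> \<longrightarrow> L (Imp \<psi> phi) \<longrightarrow> L (Imp \<psi> A)"
  proof -
    have "\<exists>A E.
      0 \<notin> V False A \<and> V True A \<subseteq> V True phi \<and> V False A \<subseteq> V False phi \<and>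
      0 \<notin> V False E \<and> V True E \<subseteq> V True phi \<and> V False E \<subseteq> V False phi \<and>
      L (Imp A phi) \<and>
      (\<forall>\<psi>. 0 \<notin> V False \<psi> \<longrightarrow> L (Imp \<psi> phi) \<longrightarrow> L (Imp \<psi> A)) \<and>
      L (Imp phi E) \<and>
      (\<forall>\<psi>. 0 \<notin> V False \<psi> \<longrightarrow> L (Imp phi \<psi>) \<longrightarrow> L (Imp E \<psi>))"
      using spec[OF spec[OF spec[OF \<open>ULIP L\<close>[unfolded ULIP_def], of phi], of 0], of False] .
    then show ?thesis
      apply (elim exE conjE)
      apply (rule that)
         apply assumption+
      done
  qed
  have "0 \<notin> V False psi" by (simp add: Neg_def)
  then have h1: "L (Imp psi A)" using A(4) k by blast
  have e0: "Collect (sem V1 fsel (Atom 0)) = {True}" by (auto simp: V1_def)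
  have e1: "True \<in> V1 1" by (auto simp: V1_def)
  have s1: "sem V1 fsel psi True"
    using e1 by (simp add: Neg_def fsel_def e0)
  have "sem V1 fsel A True" using sound[OF der[OF h1], of V1] s1 by simp
  moreover have "0 \<notin> V True A" using A(2) by auto
  ultimately have "sem V2 fsel A True"
    using free_agree[of 0 A V1 V2 fsel True] A(1) by (auto simp: V1_def V2_def)
  then have "sem V2 fsel phi True" using sound[OF der[OF A(3)], of V2] by simp
  moreover have "Collect (sem V2 fsel (Atom 0)) = {False}" by (auto simp: V2_def)
  moreover have "False \<notin> V2 1" by (simp add: V2_def)
  ultimately show False by (simp add: fsel_def)
qed

theorem mainTheorem14:
  shows "\<not> ULIP CKCEM \<and> \<not> ULIP CKCEMID"
proof
  show "\<not> ULIP CKCEM"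
    unfolding CKCEM_def
    by (rule noULIP[where L="derivable CKCEM_ax"]) (fact mono_der, fact key_der)
  show "\<not> ULIP CKCEMID"
    unfolding CKCEMID_def
    by (rule noULIP[where L="derivable CKCEMID_ax"]) (assumption, rule mono_der[OF key_der])
qed

end
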